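(* The semigroup $\Lambda_S\cap Q^+$ is generated by the elements $\alpha\in\Lambda_S\cap R^+$ together with the elements $\sigma(\alpha)=\theta(\alpha)+\alpha\in\Lambda_S$ for $\alpha\in R^+$.
   Context: $G$ connected reductive complex algebraic group with conjugation $\theta$ and real form $G_\mathbb R$; $S_\mathbb R\subset T_\mathbb R\subset M_\mathbb R\subset P_\mathbb R$ are a maximal split torus, a maximal torus, a Levi factor of a minimal parabolic $P_\mathbb R$ of $G_\mathbb R$; $S,T,M,P$ their complexifications; $B$ a Borel subgroup with $T\subset B\subset P$. $\Lambda_T=\mathrm{Hom}(\mathbb C^\times,T)$; $R\subset\Lambda_T$ the coroots, $R^+$ the positive coroots w.r.t. $B$; $Q^+$ the semigroup generated by $R^+$. $\theta$ acts on $\Lambda_T$ by $\theta(\lambda)=\theta\circ\lambda\circ c$ with $c$ complex conjugation on $\mathbb C^\times$; $\Lambda_S=\mathrm{Hom}(\mathbb C^\times,S)$ is the fixed sublattice; $\sigma(\lambda)=\theta(\lambda)+\lambda$. *)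

theory Defs
  imports "HOL-Analysis.Analysis"
begin

text \<open>The cocharacter lattice Lambda_T of the (rank n) maximal torus T and the
  character lattice X^*(T) are both modelled as int^n; the perfect pairing
  X^*(T) x Lambda_T -> Z is the standard one.\<close>

definition pair :: "int^'n \<Rightarrow> int^'n \<Rightarrow> int" where
  "pair x y = (\<Sum>i\<in>UNIV. x $ i * y $ i)"

text \<open>Reduced root datum: roots Phi in X^*(T), coroot map cov : Phi -> Lambda_T
  (alpha to alpha-check).  The coroot set is R = cov ` Phi.\<close>

definition root_datum :: "(int^'n) set \<Rightarrow> (int^'n \<Rightarrow> int^'n) \<Rightarrow> bool" where
  "root_datum Phi cov \<longleftrightarrow>
     finite Phi \<and> inj_on cov Phi \<and>
     (\<forall>a\<in>Phi. pair a (cov a) = 2) \<and>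
     (\<forall>a\<in>Phi. \<forall>b\<in>Phi. b - of_int (pair b (cov a)) *s a \<in> Phi) \<and>
     (\<forall>a\<in>Phi. \<forall>b\<in>Phi. cov b - of_int (pair a (cov b)) *s cov a \<in> cov ` Phi) \<and>
     (\<forall>a\<in>Phi. 2 *s a \<notin> Phi)"

text \<open>Positive coroots with respect to a Borel subgroup B containing T:
  the coroots of the roots that are positive on a regular cocharacter.\<close>

definition positive_coroots :: "(int^'n) set \<Rightarrow> (int^'n \<Rightarrow> int^'n) \<Rightarrow> (int^'n) set \<Rightarrow> bool" where
  "positive_coroots Phi cov Rp \<longleftrightarrow>
     (\<exists>l. (\<forall>a\<in>Phi. pair a l \<noteq> 0) \<and> Rp = cov ` {a\<in>Phi. pair a l > 0})"

definition lattice_involution :: "(int^'n \<Rightarrow> int^'n) \<Rightarrow> bool" where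
  "lattice_involution th \<longleftrightarrow> (\<forall>x y. th (x + y) = th x + th y) \<and> (\<forall>x. th (th x) = x)"

inductive_set nat_span :: "'a::comm_monoid_add set \<Rightarrow> 'a set" for A where
  zero: "0 \<in> nat_span A"
| add: "a \<in> A \<Longrightarrow> x \<in> nat_span A \<Longrightarrow> a + x \<in> nat_span A"

end

theory Submission
  imports Defs
begin

lemma pair_add_r: "pair a (x + y) = pair a x + pair a y"
  by (simp add: pair_def sum.distrib algebra_simps)
lemma pair_add_l: "pair (x + y) a = pair x a + pair y a"
  by (simp add: pair_def sum.distrib algebra_simps)
lemma pair_diff_r: "pair a (x - y) = pair a x - pair a y"
  by (simp add: pair_def sum_subtractf algebra_simps)
lemma pair_diff_l: "pair (x - y) a = pair x a - pair y a"
  by (simp add: pair_def sum_subtractf algebra_simps)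
lemma pair_minus_r: "pair a (- y) = - pair a y"
  by (simp add: pair_def sum_negf)
lemma pair_minus_l: "pair (- y) a = - pair y a"
  by (simp add: pair_def sum_negf)
lemma pair_scale_r: "pair a (c *s y) = c * pair a y"
  by (simp add: pair_def sum_distrib_left algebra_simps)
lemma pair_scale_l: "pair (c *s y) a = c * pair y a"
  by (simp add: pair_def sum_distrib_left algebra_simps)
lemma pair_zero_r: "pair a 0 = 0" by (simp add: pair_def)
lemmas pair_simps = pair_add_r pair_add_l pair_diff_r pair_diff_l pair_minus_r pair_minus_l
  pair_scale_r pair_scale_l pair_zero_r

lemma ns_add: "x \<in> nat_span A \<Longrightarrow> y \<in> nat_span A \<Longrightarrow> x + y \<in> nat_span A"
  by (induction x rule: nat_span.induct) (auto simp: add.assoc intro: nat_span.add)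
lemma ns_base: "a \<in> A \<Longrightarrow> a \<in> nat_span A"
  using nat_span.add[OF _ nat_span.zero] by fastforce
lemma ns_mono: "x \<in> nat_span A \<Longrightarrow> A \<subseteq> C \<Longrightarrow> x \<in> nat_span C"
  by (induction x rule: nat_span.induct) (auto intro: nat_span.intros)

lemma ns_extract:
  fixes f :: "'a::ab_group_add \<Rightarrow> int"
  assumes "x \<in> nat_span A" "\<And>u v. f (u + v) = f u + f v" "f x > 0"
  shows "\<exists>e\<in>A. f e > 0 \<and> x - e \<in> nat_span A"
  using assms(1,3)
proof (induction x rule: nat_span.induct)
  case zero
  have "f 0 = f 0 + f 0" using assms(2)[of 0 0] by simp
  then show ?case using zero by simp
next
  case (add a x)
  show ?case
  proof (cases "f a > 0")
    case True then show ?thesis using add by auto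
  next
    case False
    then have "f x > 0" using add assms(2) by fastforce
    then obtain e where "e \<in> A" "f e > 0" "x - e \<in> nat_span A" using add by blast
    moreover have "a + x - e = a + (x - e)" by (simp add: algebra_simps)
    ultimately show ?thesis using add by (metis nat_span.add)
  qed
qed

lemma ns_pos:
  fixes f :: "'a::ab_group_add \<Rightarrow> int"
  assumes "x \<in> nat_span A" "\<And>u v. f (u + v) = f u + f v" "\<And>a. a \<in> A \<Longrightarrow> f a > 0"
  shows "x = 0 \<or> f x > 0"
  using assms(1)
proof (induction x rule: nat_span.induct)
  case zero then show ?case by simp
next
  case (add a x)
  then show ?case using assms(2,3)[of a] by (cases "x = 0") auto
qed

locale RS =
  fixes Phi :: "(int^'n) set" and cov th thX :: "int^'n \<Rightarrow> int^'n"
    and Rp :: "(int^'n) set" and l :: "int^'n"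
  assumes fin: "finite Phi" and cinj: "inj_on cov Phi"
    and two: "\<And>a. a\<in>Phi \<Longrightarrow> pair a (cov a) = 2"
    and rfl: "\<And>a b. a\<in>Phi \<Longrightarrow> b\<in>Phi \<Longrightarrow> b - pair b (cov a) *s a \<in> Phi"
    and crfl: "\<And>a b. a\<in>Phi \<Longrightarrow> b\<in>Phi \<Longrightarrow> cov b - pair a (cov b) *s cov a \<in> cov ` Phi"
    and lreg: "\<And>a. a\<in>Phi \<Longrightarrow> pair a l \<noteq> 0"
    and Rp_eq: "Rp = cov ` {a\<in>Phi. pair a l > 0}"
    and th_add: "\<And>x y. th (x + y) = th x + th y"
    and th_th: "\<And>x. th (th x) = x"
    and transp: "\<And>a y. pair (thX a) y = pair a (th y)"
    and roots_stable: "thX ` Phi = Phi"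
    and cc: "\<And>a. a\<in>Phi \<Longrightarrow> cov (thX a) = th (cov a)"
    and parabolic: "\<And>\<alpha>. \<alpha>\<in>Rp \<Longrightarrow> th \<alpha> \<noteq> - \<alpha> \<Longrightarrow> th \<alpha> \<in> Rp"
begin

lemma th_0: "th 0 = 0"
  using th_add[of 0 0] by simp
lemma th_minus: "th (- x) = - th x"
proof -
  have "th (- x) + th x = 0" using th_add[of "- x" x] th_0 by simp
  then show ?thesis by (simp add: eq_neg_iff_add_eq_0)
qed
lemma th_diff: "th (x - y) = th x - th y"
  using th_add[of x "- y"] th_minus[of y] by simp

definition B :: "int^'n \<Rightarrow> int^'n \<Rightarrow> int" where
  "B x y = (\<Sum>b\<in>Phi. pair b x * pair b y)"

lemma B_add_l: "B (x + y) z = B x z + B y z"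
  by (simp add: B_def pair_simps sum.distrib algebra_simps)
lemma B_add_r: "B z (x + y) = B z x + B z y"
  by (simp add: B_def pair_simps sum.distrib algebra_simps)
lemma B_diff_l: "B (x - y) z = B x z - B y z"
  by (simp add: B_def pair_simps sum_subtractf algebra_simps)
lemma B_diff_r: "B z (x - y) = B z x - B z y"
  by (simp add: B_def pair_simps sum_subtractf algebra_simps)
lemma B_minus_l: "B (- x) z = - B x z"
  by (simp add: B_def pair_simps sum_negf)
lemma B_minus_r: "B z (- x) = - B z x"
  by (simp add: B_def pair_simps sum_negf)
lemma B_scale_l: "B (c *s x) z = c * B x z"
  by (simp add: B_def pair_simps sum_distrib_left algebra_simps)
lemma B_scale_r: "B z (c *s x) = c * B z x"
  by (simp add: B_def pair_simps sum_distrib_left algebra_simps)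
lemma B_zero_l: "B 0 z = 0" by (simp add: B_def pair_def)
lemma B_zero_r: "B z 0 = 0" by (simp add: B_def pair_def)
lemma B_sym: "B x y = B y x" by (simp add: B_def mult.commute)
lemmas B_simps = B_add_l B_add_r B_diff_l B_diff_r B_minus_l B_minus_r B_scale_l B_scale_r
  B_zero_l B_zero_r

lemma B_nonneg: "B x x \<ge> 0"
  unfolding B_def by (rule sum_nonneg) simp

lemma CS: "(B x y)^2 \<le> B x x * B y y"
proof -
  define s where "s = B x y"
  define t where "t = B y y"
  have "0 \<le> (\<Sum>b\<in>Phi. (t * pair b x - s * pair b y)^2)"
    by (rule sum_nonneg) simp
  also have "\<dots> = t^2 * B x x - 2 * s * t * B x y + s^2 * B y y"
    unfolding B_def
    by (simp add: power2_eq_square algebra_simps sum.distrib sum_subtractf sum_distrib_left)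
  finally have "0 \<le> t * (t * B x x - s^2)"
    unfolding s_def t_def by (simp add: power2_eq_square algebra_simps)
  moreover have "t \<ge> 0" using B_nonneg t_def by simp
  ultimately show ?thesis
  proof (cases "t = 0")
    case True
    have "(B x y)^2 \<le> B x x * B y y" if "t = 0"
    proof -
      have "\<forall>b\<in>Phi. pair b y = 0"
        using True unfolding t_def B_def
        by (subst (asm) sum_nonneg_eq_0_iff) (auto simp: fin)
      then have "B x y = 0" by (simp add: B_def)
      then show ?thesis using B_nonneg[of x] B_nonneg[of y] by simp
    qed
    then show ?thesis using True by simp
  next
    case False
    then have "t > 0" using \<open>t \<ge> 0\<close> by simp
    then have "t * B x x - s^2 \<ge> 0" using \<open>0 \<le> t * (t * B x x - s^2)\<close>
      by (simp add: zero_le_mult_iff)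
    then show ?thesis unfolding s_def t_def by (simp add: algebra_simps)
  qed
qed

definition rf :: "int^'n \<Rightarrow> int^'n \<Rightarrow> int^'n" where
  "rf a b = b - pair b (cov a) *s a"

lemma rf_rf: "a \<in> Phi \<Longrightarrow> rf a (rf a b) = b"
  by (simp add: rf_def pair_simps two vec_eq_iff algebra_simps)

lemma rf_img: "a \<in> Phi \<Longrightarrow> rf a ` Phi = Phi"
proof -
  assume a: "a \<in> Phi"
  have "inj_on (rf a) Phi" by (metis a inj_onI rf_rf)
  moreover have "rf a ` Phi \<subseteq> Phi" using rfl a by (auto simp: rf_def)
  ultimately show ?thesis using endo_inj_surj fin by blast
qed

lemma B_refl_inv:
  assumes a: "a \<in> Phi"
  shows "B (y - pair a y *s cov a) (z - pair a z *s cov a) = B y z"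
proof -
  have inj: "inj_on (rf a) Phi" by (metis a inj_onI rf_rf)
  have "B (y - pair a y *s cov a) (z - pair a z *s cov a)
      = (\<Sum>b\<in>Phi. pair (rf a b) y * pair (rf a b) z)"
    unfolding B_def by (rule sum.cong) (simp_all add: rf_def pair_simps algebra_simps)
  also have "\<dots> = (\<Sum>b\<in>rf a ` Phi. pair b y * pair b z)"
    by (simp add: sum.reindex[OF inj])
  also have "\<dots> = B y z" by (simp add: rf_img[OF a] B_def)
  finally show ?thesis .
qed

lemma KR:
  assumes a: "a \<in> Phi"
  shows "2 * B (cov a) v = pair a v * B (cov a) (cov a)"
proof -
  have e: "cov a - pair a (cov a) *s cov a = - cov a" using two[OF a]
    by (simp add: vec_eq_iff)
  from B_refl_inv[OF a, of "cov a" v] have "B (- cov a) (v - pair a v *s cov a) = B (cov a) v"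
    unfolding e .
  then show ?thesis by (simp add: B_simps algebra_simps)
qed

lemma B_cov_pos: "a \<in> Phi \<Longrightarrow> B (cov a) (cov a) > 0"
proof -
  assume a: "a \<in> Phi"
  have "(pair a (cov a))^2 \<le> B (cov a) (cov a)"
    unfolding B_def power2_eq_square
    by (rule member_le_sum[OF a _ fin]) simp
  then show ?thesis using two[OF a] by simp
qed

lemma B_th: "B (th x) (th y) = B x y"
proof -
  have inj: "inj_on thX Phi"
    using eq_card_imp_inj_on[OF fin, of thX] roots_stable by simp
  have "B (th x) (th y) = (\<Sum>b\<in>Phi. pair (thX b) x * pair (thX b) y)"
    unfolding B_def by (simp add: transp)
  also have "\<dots> = (\<Sum>b\<in>thX ` Phi. pair b x * pair b y)"
    by (simp add: sum.reindex[OF inj])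
  finally show ?thesis by (simp add: roots_stable B_def)
qed

end

context RS begin

abbreviation R where "R \<equiv> cov ` Phi"

lemma R_neg: "x \<in> R \<Longrightarrow> - x \<in> R"
proof -
  assume "x \<in> R"
  then obtain a where a: "a \<in> Phi" "x = cov a" by auto
  have e: "cov a - pair a (cov a) *s cov a = - cov a" using two[OF a(1)]
    by (simp add: vec_eq_iff)
  from crfl[OF a(1) a(1)] show ?thesis unfolding e a(2) .
qed

lemma R_th: "x \<in> R \<Longrightarrow> th x \<in> R"
proof -
  assume "x \<in> R"
  then obtain a where a: "a \<in> Phi" "x = cov a" by auto
  then have "thX a \<in> Phi" using roots_stable by auto
  then show ?thesis using cc[OF a(1)] a by (metis image_eqI)
qed

definition h where "h v = B v l"

lemma h_add: "h (x + y) = h x + h y" by (simp add: h_def B_simps)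
lemma h_diff: "h (x - y) = h x - h y" by (simp add: h_def B_simps)
lemma h_minus: "h (- x) = - h x" by (simp add: h_def B_simps)
lemma h_zero: "h 0 = 0" by (simp add: h_def B_simps)

lemma h_cov: "a \<in> Phi \<Longrightarrow> 2 * h (cov a) = pair a l * B (cov a) (cov a)"
  using KR by (simp add: h_def)

lemma Rp_R: "Rp \<subseteq> R" using Rp_eq by auto

lemma R_h_ne: "x \<in> R \<Longrightarrow> h x \<noteq> 0"
proof -
  assume "x \<in> R"
  then obtain a where a: "a \<in> Phi" "x = cov a" by auto
  show ?thesis using h_cov[OF a(1)] B_cov_pos[OF a(1)] lreg[OF a(1)] a by auto
qed

lemma R_pos_iff: "x \<in> R \<Longrightarrow> x \<in> Rp \<longleftrightarrow> h x > 0"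
proof -
  assume "x \<in> R"
  then obtain a where a: "a \<in> Phi" "x = cov a" by auto
  have "h x > 0 \<longleftrightarrow> 2 * h x > 0" by simp
  also have "\<dots> \<longleftrightarrow> pair a l * B (cov a) (cov a) > 0" using h_cov[OF a(1)] a by simp
  also have "\<dots> \<longleftrightarrow> pair a l > 0" using B_cov_pos[OF a(1)] by (simp add: zero_less_mult_iff)
  finally have p: "h x > 0 \<longleftrightarrow> pair a l > 0" .
  have "x \<in> Rp \<longleftrightarrow> pair a l > 0"
  proof
    assume "x \<in> Rp"
    then obtain a' where "a' \<in> Phi" "pair a' l > 0" "cov a' = x" using Rp_eq by auto
    then have "a' = a" using cinj a by (metis inj_onD)
    then show "pair a l > 0" using \<open>pair a' l > 0\<close> by simp
  next
    assume "pair a l > 0" then show "x \<in> Rp" using Rp_eq a by auto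
  qed
  then show ?thesis using p by simp
qed

lemma Rp_h: "x \<in> Rp \<Longrightarrow> h x > 0"
  using R_pos_iff Rp_R by blast

lemma R_split: "x \<in> R \<Longrightarrow> x \<in> Rp \<or> - x \<in> Rp"
proof -
  assume x: "x \<in> R"
  have "h x > 0 \<or> h (- x) > 0" using R_h_ne[OF x] h_minus[of x] by linarith
  then show ?thesis using R_pos_iff[OF x] R_pos_iff[OF R_neg[OF x]] by blast
qed

lemma lemK:
  assumes a: "a \<in> Phi" and b: "b \<in> Phi"
    and ab: "pair a (cov b) = 2" and ba: "pair b (cov a) = 2"
  shows "a = b"
proof (rule ccontr)
  assume ne: "a \<noteq> b"
  define d where "d = a - b"
  have d1: "pair d (cov a) = 0" using two[OF a] ba by (simp add: d_def pair_simps)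
  have d2: "pair d (cov b) = 0" using two[OF b] ab by (simp add: d_def pair_simps)
  have all: "a + (2 * int k) *s d \<in> Phi" for k
  proof (induction k)
    case 0 then show ?case using a by (simp add: vec_eq_iff)
  next
    case (Suc k)
    define y where "y = a + (2 * int k) *s d"
    have y: "y \<in> Phi" using Suc y_def by simp
    have py: "pair y (cov b) = 2" using ab d2 by (simp add: y_def pair_simps)
    define z where "z = y - pair y (cov b) *s b"
    have z: "z \<in> Phi" using rfl[OF b y] z_def by simp
    have pz: "pair z (cov a) = -2"
      using ba two[OF a] d1 d2 ab by (simp add: z_def py y_def pair_simps)
    have "z - pair z (cov a) *s a \<in> Phi" using rfl[OF a z] .
    moreover have "z - pair z (cov a) *s a = a + (2 * int (Suc k)) *s d"
    proof -
      have "z - pair z (cov a) *s a = z + 2 *s a" by (simp add: pz vec_eq_iff)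
      also have "\<dots> = y - 2 *s b + 2 *s a" by (simp add: z_def py)
      also have "\<dots> = a + (2 * int (Suc k)) *s d" by (simp add: y_def d_def vec_eq_iff algebra_simps)
      finally show ?thesis .
    qed
    ultimately show ?case by simp
  qed
  have "d \<noteq> 0" using ne d_def by simp
  have inj: "inj (\<lambda>k::nat. a + (2 * int k) *s d)"
  proof (rule injI)
    fix k1 k2 :: nat
    assume "a + (2 * int k1) *s d = a + (2 * int k2) *s d"
    then have e: "(2 * int k1) *s d = (2 * int k2) *s d" by simp
    obtain i where "d $ i \<noteq> 0" using \<open>d \<noteq> 0\<close> by (metis vec_eq_iff zero_index)
    moreover have "(2 * int k1) * d $ i = (2 * int k2) * d $ i" using e by (metis vector_smult_component)
    ultimately show "k1 = k2" by simp
  qed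
  have "range (\<lambda>k::nat. a + (2 * int k) *s d) \<subseteq> Phi" using all by auto
  then have "finite (range (\<lambda>k::nat. a + (2 * int k) *s d))" using fin finite_subset by blast
  then show False using inj finite_imageD infinite_UNIV_nat by blast
qed

lemma uv:
  assumes a: "a \<in> Phi" and b: "b \<in> Phi"
  shows "pair a (cov b) * pair b (cov a) \<le> 4"
    and "B (cov a) (cov b) > 0 \<Longrightarrow> pair a (cov b) > 0"
proof -
  let ?x = "cov a" and ?y = "cov b"
  let ?u = "pair a ?y" and ?v = "pair b ?x"
  have e1: "2 * B ?x ?y = ?u * B ?x ?x" using KR[OF a] .
  have e2: "2 * B ?x ?y = ?v * B ?y ?y" using KR[OF b, of ?x] B_sym by simp
  have px: "B ?x ?x > 0" and py: "B ?y ?y > 0" using B_cov_pos a b by auto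
  have "4 * (B ?x ?y)^2 = (2 * B ?x ?y) * (2 * B ?x ?y)" by (simp add: power2_eq_square)
  also have "\<dots> = (?u * B ?x ?x) * (?v * B ?y ?y)" by (simp only: e1[symmetric] e2[symmetric])
  also have "\<dots> = (?u * ?v) * (B ?x ?x * B ?y ?y)" by (simp add: mult_ac)
  finally have eq4: "4 * (B ?x ?y)^2 = (?u * ?v) * (B ?x ?x * B ?y ?y)" .
  have "4 * (B ?x ?y)^2 \<le> 4 * (B ?x ?x * B ?y ?y)" using CS by simp
  then have le: "(?u * ?v) * (B ?x ?x * B ?y ?y) \<le> 4 * (B ?x ?x * B ?y ?y)" using eq4 by simp
  moreover have "B ?x ?x * B ?y ?y > 0" using px py by simp
  ultimately show "?u * ?v \<le> 4" using mult_le_cancel_right_pos by blast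
  show "B ?x ?y > 0 \<Longrightarrow> ?u > 0"
  proof -
    assume "B ?x ?y > 0"
    then have "?u * B ?x ?x > 0" using e1 by simp
    then show ?thesis using px by (simp add: zero_less_mult_iff)
  qed
qed

lemma two22: "(u::int) \<ge> 2 \<Longrightarrow> v \<ge> 2 \<Longrightarrow> u * v \<le> 4 \<Longrightarrow> u = 2 \<and> v = 2"
proof -
  assume u: "u \<ge> 2" and v: "v \<ge> 2" and p: "u * v \<le> 4"
  have "u * 2 \<le> u * v" using u v by (simp add: mult_left_mono)
  moreover have "2 * v \<le> u * v" using u v by (simp add: mult_right_mono)
  ultimately show ?thesis using p u v by linarith
qed

lemma lemB:
  assumes x: "x \<in> R" and y: "y \<in> R" and ne: "x \<noteq> y" and pos: "B x y > 0"
  shows "x - y \<in> R"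
proof -
  obtain a where a: "a \<in> Phi" "x = cov a" using x by auto
  obtain b where b: "b \<in> Phi" "y = cov b" using y by auto
  let ?u = "pair a y" and ?v = "pair b x"
  have u: "?u > 0" using uv(2)[OF a(1) b(1)] pos a b by simp
  have v: "?v > 0" using uv(2)[OF b(1) a(1)] pos a b B_sym by simp
  have uv4: "?u * ?v \<le> 4" using uv(1)[OF a(1) b(1)] a b by simp
  show ?thesis
  proof (cases "?v = 1")
    case True
    then show ?thesis using crfl[OF b(1) a(1)] a b by simp
  next
    case F1: False
    show ?thesis
    proof (cases "?u = 1")
      case True
      then have "y - x \<in> R" using crfl[OF a(1) b(1)] a b by simp
      then show ?thesis using R_neg[of "y - x"] by simp
    next
      case False
      then have "?u \<ge> 2" "?v \<ge> 2" using u v F1 by auto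
      then have "?u = 2 \<and> ?v = 2" using uv4
        using two22 by blast
      then have "a = b" using lemK[OF a(1) b(1)] a b by simp
      then show ?thesis using ne a b by simp
    qed
  qed
qed

lemma lemA:
  assumes x: "x \<in> R" and y: "y \<in> R" and ne: "x \<noteq> - y" and neg: "B x y < 0"
  shows "x + y \<in> R"
proof -
  have "x \<noteq> - y" "B x (- y) > 0" using ne neg by (auto simp: B_simps)
  then have "x - (- y) \<in> R" using lemB[OF x R_neg[OF y]] by blast
  then show ?thesis by simp
qed

lemma lemE:
  assumes x: "x \<in> R" and y: "y \<in> R" and ne: "x \<noteq> y" and eq: "B y y = B x x"
  shows "B x y < B x x"
proof (rule ccontr)
  assume "\<not> B x y < B x x"
  then have ge: "B x y \<ge> B x x" by simp
  obtain a where a: "a \<in> Phi" "x = cov a" using x by auto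
  obtain b where b: "b \<in> Phi" "y = cov b" using y by auto
  have px: "B x x > 0" using B_cov_pos a by simp
  have e1: "2 * B x y = pair a y * B x x" using KR[OF a(1)] a by simp
  have e2: "2 * B x y = pair b x * B x x" using KR[OF b(1), of x] B_sym b eq by simp
  have "pair a y * B x x \<ge> 2 * B x x" using e1 ge by simp
  then have u: "pair a y \<ge> 2" using px by simp
  have "pair b x * B x x \<ge> 2 * B x x" using e2 ge by simp
  then have v: "pair b x \<ge> 2" using px by simp
  have "pair a y * pair b x \<le> 4" using uv(1)[OF a(1) b(1)] a b by simp
  then have "pair a y = 2 \<and> pair b x = 2" using u v two22 by blast
  then have "a = b" using lemK[OF a(1) b(1)] a b by simp
  then show False using ne a b by simp
qed

end

context RS begin

abbreviation Q where "Q \<equiv> nat_span Rp"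
abbreviation G where "G \<equiv> {\<alpha>\<in>Rp. th \<alpha> = \<alpha>} \<union> (\<lambda>\<alpha>. th \<alpha> + \<alpha>) ` Rp"
abbreviation S where "S \<equiv> nat_span G"
abbreviation R0p where "R0p \<equiv> {\<delta>\<in>Rp. th \<delta> = - \<delta>}"

lemma Q_h: "x \<in> Q \<Longrightarrow> x = 0 \<or> h x > 0"
  using ns_pos[of x Rp h] h_add Rp_h by blast

lemma Q_h_nonneg: "x \<in> Q \<Longrightarrow> h x \<ge> 0"
  using Q_h[of x] h_zero by force

lemma G_fix: "g \<in> G \<Longrightarrow> th g = g"
  using th_th th_add by (auto simp: add.commute)

lemma G_Q: "g \<in> G \<Longrightarrow> g \<in> Q"
proof -
  assume g: "g \<in> G"
  show ?thesis
  proof (cases "g \<in> Rp")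
    case True then show ?thesis by (rule ns_base)
  next
    case False
    then obtain \<alpha> where a: "\<alpha> \<in> Rp" "g = th \<alpha> + \<alpha>" using g by auto
    show ?thesis
    proof (cases "th \<alpha> = - \<alpha>")
      case True then show ?thesis using a nat_span.zero by simp
    next
      case False
      then have "th \<alpha> \<in> Rp" using parabolic a by blast
      then show ?thesis using a ns_add ns_base by blast
    qed
  qed
qed

lemma S_sub: "x \<in> S \<Longrightarrow> th x = x \<and> x \<in> Q"
proof (induction x rule: nat_span.induct)
  case zero then show ?case using th_0 nat_span.zero by simp
next
  case (add a x)
  have a: "th a = a" "a \<in> Q" using G_fix[OF add.hyps(1)] G_Q[OF add.hyps(1)] by auto
  then show ?case using add.IH th_add[of a x] ns_add[of a Rp x] by simp
qed

lemma R0_span: "z \<in> nat_span R0p \<Longrightarrow> th z = - z \<and> z \<in> Q"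
proof (induction z rule: nat_span.induct)
  case zero then show ?case using th_0 nat_span.zero by simp
next
  case (add a x)
  have a: "th a = - a" "a \<in> Q" using add.hyps(1) ns_base[of a Rp] by auto
  then show ?case using add.IH th_add[of a x] ns_add[of a Rp x] by simp
qed

lemma B_anti: "th u = u \<Longrightarrow> th z = - z \<Longrightarrow> B u z = 0"
proof -
  assume "th u = u" "th z = - z"
  then have "B u z = B u (- z)" using B_th[of u z] by simp
  then show ?thesis by (simp add: B_simps)
qed

lemma Q_Bpos: "x \<in> Q \<Longrightarrow> x \<noteq> 0 \<Longrightarrow> B x x > 0"
proof (rule ccontr)
  assume x: "x \<in> Q" "x \<noteq> 0" and "\<not> B x x > 0"
  then have "B x x = 0" using B_nonneg[of x] by simp
  then have "\<forall>b\<in>Phi. pair b x = 0"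
    unfolding B_def by (subst (asm) sum_nonneg_eq_0_iff) (auto simp: fin)
  then have "h x = 0" by (simp add: h_def B_def)
  then show False using Q_h[OF x(1)] x(2) by simp
qed

lemma Rp_sum_ne: "x \<in> Rp \<Longrightarrow> y \<in> Rp \<Longrightarrow> x + y \<noteq> 0"
proof
  assume "x \<in> Rp" "y \<in> Rp" "x + y = 0"
  then have "h (x + y) = 0" "h x > 0" "h y > 0" using h_zero Rp_h by auto
  then show False using h_add by simp
qed

lemma Rp_fin: "finite Rp" using Rp_eq fin by simp

lemma lemF: "z \<in> nat_span R0p \<Longrightarrow> th u = u \<Longrightarrow> u + z \<in> Q \<Longrightarrow> u \<in> Q"
proof (induction "nat (h z)" arbitrary: z rule: less_induct)
  case less
  have IH: "u \<in> Q" if "z' \<in> nat_span R0p" "u + z' \<in> Q" "h z' < h z" for z'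
  proof -
    have "h z' \<ge> 0" using R0_span[OF that(1)] Q_h_nonneg by blast
    then have "nat (h z') < nat (h z)" using that(3) by simp
    then show ?thesis using less.hyps that(1,2) less.prems(2) by blast
  qed
  show ?case
  proof (cases "z = 0")
    case True then show ?thesis using less.prems by simp
  next
    case nz: False
    have thz: "th z = - z" and zQ: "z \<in> Q" using R0_span[OF less.prems(1)] by auto
    have Bzz: "B z z > 0" using Q_Bpos[OF zQ nz] .
    have Buz: "B u z = 0" using B_anti[OF less.prems(2) thz] .
    define v where "v = u + z"
    have vQ: "v \<in> Q" using less.prems(3) v_def by simp
    have "B v z > 0" using Bzz Buz by (simp add: v_def B_simps)
    then obtain e where e: "e \<in> Rp" "B e z > 0" "v - e \<in> Q"
      using ns_extract[OF vQ, of "\<lambda>w. B w z"] by (auto simp: B_simps)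
    obtain d where d: "d \<in> R0p" "B e d > 0" "z - d \<in> nat_span R0p"
      using ns_extract[OF less.prems(1), of "B e"] e(2) by (auto simp: B_simps)
    have hd: "h d > 0" using d(1) Rp_h by auto
    have he: "h e > 0" using e(1) Rp_h by auto
    show ?thesis
    proof (cases "e = d")
      case True
      have "u + (z - d) = v - e" using True v_def by (simp add: algebra_simps)
      then have q1: "u + (z - d) \<in> Q" using e(3) by simp
      have q2: "h (z - d) < h z" using hd h_diff by simp
      show ?thesis by (rule IH[OF d(3) q1 q2])
    next
      case ne: False
      have eR: "e \<in> R" and dR: "d \<in> R" using e(1) d(1) Rp_R by auto
      have edR: "e - d \<in> R" using lemB[OF eR dR ne d(2)] .
      show ?thesis
      proof (cases "e - d \<in> Rp")
        case True
        have "u + (z - d) = (v - e) + (e - d)" using v_def by (simp add: algebra_simps)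
        moreover have "(v - e) + (e - d) \<in> Q" using ns_add[OF e(3) ns_base[OF True]] .
        ultimately have q1: "u + (z - d) \<in> Q" by (simp only:)
        have q2: "h (z - d) < h z" using hd h_diff by simp
        show ?thesis by (rule IH[OF d(3) q1 q2])
      next
        case False
        then have d2: "d - e \<in> Rp" using R_split[OF edR] by simp
        show ?thesis
        proof (cases "th e = - e")
          case True
          have "th (d - e) = - (d - e)" using True d(1) th_diff by simp
          then have r0: "d - e \<in> R0p" using d2 by simp
          have z'R: "(z - d) + (d - e) \<in> nat_span R0p" using ns_add[OF d(3) ns_base[OF r0]] .
          have "u + ((z - d) + (d - e)) = v - e" using v_def by (simp add: algebra_simps)
          then have q1: "u + ((z - d) + (d - e)) \<in> Q" using e(3) by (simp only:)
          have q2: "h ((z - d) + (d - e)) < h z" using he h_diff h_add by simp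
          show ?thesis by (rule IH[OF z'R q1 q2])
        next
          case False
          then have the: "th e \<in> Rp" using parabolic e(1) by blast
          have td2: "th (d - e) = - d - th e" using th_diff d(1) by simp
          have "h (th (d - e)) < 0" using td2 h_diff h_minus hd Rp_h[OF the] by simp
          moreover have "th (d - e) \<in> Rp"
          proof (rule parabolic[OF d2])
            show "th (d - e) \<noteq> - (d - e)"
            proof
              assume A: "th (d - e) = - (d - e)"
              have "th e = - d - th (d - e)" using td2 by (simp add: algebra_simps)
              also have "\<dots> = - e" using A by simp
              finally show False using False by simp
            qed
          qed
          ultimately show ?thesis using Rp_h by fastforce
        qed
      qed
    qed
  qed
qed

end

context RS begin

lemma main: "th lam = lam \<Longrightarrow> lam \<in> Q \<Longrightarrow> lam \<in> S"
proof (induction "nat (h lam)" arbitrary: lam rule: less_induct)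
  case less
  have fixl: "th lam = lam" and lQ: "lam \<in> Q" using less.prems by auto
  have red: "lam \<in> S" if gG: "g \<in> G" and gn: "g \<noteq> 0" and mQ: "lam - g \<in> Q" for g
  proof -
    have thg: "th g = g" using G_fix[OF gG] .
    have hg: "h g > 0" using Q_h[OF G_Q[OF gG]] gn by simp
    have fm: "th (lam - g) = lam - g" using th_diff fixl thg by simp
    have "h (lam - g) \<ge> 0" using Q_h_nonneg[OF mQ] .
    then have "nat (h (lam - g)) < nat (h lam)" using hg h_diff[of lam g] by simp
    then have "lam - g \<in> S" using less.hyps fm mQ by blast
    then have "g + (lam - g) \<in> S" using nat_span.add[OF gG] by blast
    then show ?thesis by simp
  qed
  show ?case
  proof (cases "lam = 0")
    case True then show ?thesis using nat_span.zero by simp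
  next
    case lnz: False
    have "h lam > 0" using Q_h[OF lQ] lnz by simp
    then obtain a0 where a0: "a0 \<in> Rp" "lam - a0 \<in> Q"
      using ns_extract[OF lQ, of h] h_add by blast
    define P where "P = {r \<in> Rp. lam - r \<in> Q}"
    have Pfin: "finite P" using Rp_fin P_def by simp
    have Pne: "P \<noteq> {}" using a0 P_def by auto
    define m where "m = Max (h ` P)"
    have "m \<in> h ` P" using Pfin Pne m_def by simp
    then obtain r where rP: "r \<in> P" and hr: "h r = m" by auto
    have rmax: "h y \<le> h r" if "y \<in> P" for y
      using that Pfin m_def hr by simp
    have r: "r \<in> Rp" "lam - r \<in> Q" using rP P_def by auto
    define w where "w = lam - r"
    have wQ: "w \<in> Q" using r w_def by simp
    have rR: "r \<in> R" using r(1) Rp_R by auto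
    have hrp: "h r > 0" using Rp_h r(1) by simp
    show ?thesis
    proof (cases "th r = r")
      case True
      then have "r \<in> G" using r(1) by simp
      moreover have "r \<noteq> 0" using hrp h_zero by auto
      ultimately show ?thesis using red r(2) by blast
    next
      case nfix: False
      have grow: "B r w \<ge> 0"
      proof (rule ccontr)
        assume "\<not> B r w \<ge> 0"
        then have "- B r w > 0" by simp
        then obtain e where e: "e \<in> Rp" "- B r e > 0" "w - e \<in> Q"
          using ns_extract[OF wQ, of "\<lambda>v. - B r v"] by (auto simp: B_simps)
        have eR: "e \<in> R" using e(1) Rp_R by auto
        have he: "h e > 0" using Rp_h e(1) by simp
        have "r \<noteq> - e" using hrp he h_minus by force
        then have reR: "r + e \<in> R" using lemA[OF rR eR] e(2) by simp
        have "h (r + e) > 0" using hrp he h_add by simp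
        then have "r + e \<in> Rp" using R_pos_iff[OF reR] by simp
        moreover have "lam - (r + e) \<in> Q" using e(3) w_def by (simp add: algebra_simps)
        ultimately have "r + e \<in> P" using P_def by simp
        then have "h (r + e) \<le> h r" using rmax by simp
        then show False using he h_add by simp
      qed
      have Blr: "B lam r \<ge> B r r"
      proof -
        have "lam = r + w" using w_def by simp
        then have "B lam r = B r r + B w r" by (simp add: B_simps)
        then show ?thesis using grow B_sym[of r w] by simp
      qed
      have Brr: "B r r > 0" using rR B_cov_pos by auto
      have nanti: "th r \<noteq> - r"
      proof
        assume "th r = - r"
        then have "B lam r = 0" using B_anti fixl by simp
        then show False using Blr Brr by simp
      qed
      define r' where "r' = th r"
      have r'Rp: "r' \<in> Rp" using parabolic[OF r(1) nanti] r'_def by simp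
      have r'R: "r' \<in> R" using r'Rp Rp_R by auto
      have rne: "r \<noteq> r'" using nfix r'_def by simp
      have Br'r': "B r' r' = B r r" using B_th r'_def by simp
      have Brr': "B r r' < B r r" using lemE[OF rR r'R rne Br'r'] .
      have Blr': "B lam r' = B lam r" using B_th[of lam r] fixl r'_def by simp
      have Bwr': "B w r' > 0"
      proof -
        have "B w r' = B lam r' - B r r'" using w_def by (simp add: B_simps)
        then show ?thesis using Blr' Blr Brr' by simp
      qed
      obtain e where e: "e \<in> Rp" "B e r' > 0" "w - e \<in> Q"
        using ns_extract[OF wQ, of "\<lambda>v. B v r'"] Bwr' by (auto simp: B_simps)
      have eR: "e \<in> R" using e(1) Rp_R by auto
      have he: "h e > 0" using Rp_h e(1) by simp
      have sG: "r' + r \<in> G" using r(1) r'_def by simp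
      have sn: "r' + r \<noteq> 0" using Rp_sum_ne[OF r'Rp r(1)] .
      have thr': "th r' = r" using th_th r'_def by simp
      show ?thesis
      proof (cases "e = r'")
        case True
        have "lam - (r' + r) = w - e" using True w_def by (simp add: algebra_simps)
        then show ?thesis using red[OF sG sn] e(3) by simp
      next
        case ne: False
        have er'R: "e - r' \<in> R" using lemB[OF eR r'R ne e(2)] .
        show ?thesis
        proof (cases "e - r' \<in> Rp")
          case True
          have "lam - (r' + r) = (w - e) + (e - r')" using w_def by (simp add: algebra_simps)
          moreover have "(w - e) + (e - r') \<in> Q" using ns_add[OF e(3) ns_base[OF True]] .
          ultimately show ?thesis using red[OF sG sn] by (simp only:)
        next
          case False
          define d where "d = r' - e"
          have dRp: "d \<in> Rp" using R_split[OF er'R] False d_def by simp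
          have dR: "d \<in> R" using dRp Rp_R by auto
          have thd: "th d = r - th e" using th_diff thr' d_def by simp
          show ?thesis
          proof (cases "th e = - e")
            case True
            have thd2: "th d = r + e" using thd True by simp
            have tdR: "th d \<in> R" using R_th[OF dR] .
            have "h (th d) > 0" using thd2 h_add hrp he by simp
            then have "th d \<in> Rp" using R_pos_iff[OF tdR] by simp
            moreover have "lam - th d \<in> Q" using thd2 e(3) w_def by (simp add: algebra_simps)
            ultimately have "th d \<in> P" using P_def by simp
            then have "h (th d) \<le> h r" using rmax by simp
            then show ?thesis using thd2 h_add he by simp
          next
            case nae: False
            have theRp: "th e \<in> Rp" using parabolic[OF e(1) nae] .
            have seG: "th e + e \<in> G" using e(1) by simp
            have sen: "th e + e \<noteq> 0" using Rp_sum_ne[OF theRp e(1)] .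
            show ?thesis
            proof (cases "th d = - d")
              case True
              define u where "u = lam - (th e + e)"
              have thse: "th (th e + e) = th e + e" using G_fix[OF seG] .
              have fu: "th u = u" using th_diff fixl thse u_def by simp
              have the2: "th e = r + d" using thd True by (simp add: algebra_simps)
              have "u + d = w - e" unfolding u_def w_def the2 by (simp add: algebra_simps)
              then have udQ: "u + d \<in> Q" using e(3) by simp
              have dR0: "d \<in> nat_span R0p" using ns_base[of d R0p] dRp True by simp
              have "u \<in> Q" using lemF[OF dR0 fu udQ] .
              then show ?thesis using red[OF seG sen] u_def by simp
            next
              case False
              have tdRp: "th d \<in> Rp" using parabolic[OF dRp False] .
              have "lam - (th e + e) = (w - e) + th d" using thd w_def by (simp add: algebra_simps)
              moreover have "(w - e) + th d \<in> Q" using ns_add[OF e(3) ns_base[OF tdRp]] .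
              ultimately show ?thesis using red[OF seG sen] by (simp only:)
            qed
          qed
        qed
      qed
    qed
  qed
qed

theorem eq: "{x. th x = x} \<inter> Q = S"
  using main S_sub by blast

end

theorem lemma2p1:
  fixes Phi :: "(int^'n) set" and cov th thX :: "int^'n \<Rightarrow> int^'n"
    and Rp :: "(int^'n) set"
  assumes rd: "root_datum Phi cov"
    and pos: "positive_coroots Phi cov Rp"
    and inv: "lattice_involution th"
    and transp: "\<forall>a y. pair (thX a) y = pair a (th y)"
    and roots_stable: "thX ` Phi = Phi"
    and coroots_compat: "\<forall>a\<in>Phi. cov (thX a) = th (cov a)"
    and parabolic: "\<forall>\<alpha>\<in>Rp. th \<alpha> \<noteq> - \<alpha> \<longrightarrow> th \<alpha> \<in> Rp"
  shows "{l. th l = l} \<inter> nat_span Rp =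
         nat_span ({\<alpha>\<in>Rp. th \<alpha> = \<alpha>} \<union> (\<lambda>\<alpha>. th \<alpha> + \<alpha>) ` Rp)"
proof -
  obtain l where l: "\<forall>a\<in>Phi. pair a l \<noteq> 0" "Rp = cov ` {a\<in>Phi. pair a l > 0}"
    using pos unfolding positive_coroots_def by blast
  interpret RS Phi cov th thX Rp l
    apply unfold_locales
    using rd inv transp roots_stable coroots_compat parabolic l
    unfolding root_datum_def lattice_involution_def by auto
  show ?thesis using eq by simp
qed

end
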